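(* Let $k$ be an integer. (1) Any root quadruple $\mathbf a=(a,b,c,d)$ with $Q_{\mathcal D}(\mathbf a)=k$, $a\le b\le c\le d$ and $L(\mathbf a)>0$ satisfies $0\le b\le c\le d$; moreover, if $k>0$ then $a<0$, and if $k\le0$ then $a\le\sqrt{|k|}$. (2) For each pair of integers $(k,-n)$ there are only finitely many root quadruples $\mathbf a=(a,b,c,d)$, $a\le b\le c\le d$, with $Q_{\mathcal D}(\mathbf a)=k$ and $a=-n$, except for the pairs $(k,-n)=(4l^2,-l)$ with $l\ge0$; for each such exceptional pair there is an infinite family of root quadruples $\{(-l,l,c,c):c\ge\max(l,1)\}$.
   Context: $Q_{\mathcal D}(a,b,c,d)=2(a^2+b^2+c^2+d^2)-(a+b+c+d)^2$, $L(\mathbf a)=a+b+c+d$, $|\mathbf a|=|a|+|b|+|c|+|d|$. $\mathbf S_i$ ($i=1,\dots,4$) is the integer matrix replacing the $i$-th coordinate $a_i$ of a quadruple by $2\sum_{j\ne i}a_j-a_i$, other coordinates fixed. An integer quadruple is reduced if no $\mathbf S_i$ strictly decreases $|\cdot|$. A reduced quadruple ordered as $a\le b\le c\le d$ with $L\ge 0$ is a root quadruple if $a+b+c\ge d>0$; a reduced quadruple with $L<0$ is a root quadruple if $(-d,-c,-b,-a)$ is one. *)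

theory Defs
  imports Complex_Main
begin

type_synonym quad = "int \<times> int \<times> int \<times> int"

definition QD :: "quad \<Rightarrow> int" where
  "QD q = (case q of (a,b,c,d) \<Rightarrow> 2*(a^2+b^2+c^2+d^2) - (a+b+c+d)^2)"

definition Lsum :: "quad \<Rightarrow> int" where
  "Lsum q = (case q of (a,b,c,d) \<Rightarrow> a+b+c+d)"

definition norm1 :: "quad \<Rightarrow> int" where
  "norm1 q = (case q of (a,b,c,d) \<Rightarrow> \<bar>a\<bar>+\<bar>b\<bar>+\<bar>c\<bar>+\<bar>d\<bar>)"

definition S :: "nat \<Rightarrow> quad \<Rightarrow> quad" where
  "S i q = (case q of (a,b,c,d) \<Rightarrow>
     (if i = 1 then (2*(b+c+d) - a, b, c, d)
      else if i = 2 then (a, 2*(a+c+d) - b, c, d)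
      else if i = 3 then (a, b, 2*(a+b+d) - c, d)
      else if i = 4 then (a, b, c, 2*(a+b+c) - d)
      else (a,b,c,d)))"

definition reduced :: "quad \<Rightarrow> bool" where
  "reduced q \<longleftrightarrow> (\<forall>i\<in>{1..4::nat}. \<not> norm1 (S i q) < norm1 q)"

definition root_nonneg :: "int \<Rightarrow> int \<Rightarrow> int \<Rightarrow> int \<Rightarrow> bool" where
  "root_nonneg a b c d \<longleftrightarrow> a \<le> b \<and> b \<le> c \<and> c \<le> d \<and> reduced (a,b,c,d)
     \<and> Lsum (a,b,c,d) \<ge> 0 \<and> a + b + c \<ge> d \<and> d > 0"

definition root_quad :: "int \<Rightarrow> int \<Rightarrow> int \<Rightarrow> int \<Rightarrow> bool" where
  "root_quad a b c d \<longleftrightarrow> root_nonneg a b c d \<or>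
     (a \<le> b \<and> b \<le> c \<and> c \<le> d \<and> reduced (a,b,c,d) \<and> Lsum (a,b,c,d) < 0
      \<and> root_nonneg (-d) (-c) (-b) (-a))"

end

theory Submission
  imports Defs
begin

lemma QD_id: "QD (a,b,c,d) = (a+b+c-d)^2 - 4*(a*b+b*c+c*a)"
  unfolding QD_def by (simp add: power2_eq_square algebra_simps)

lemma root_basic:
  assumes "root_nonneg a b c d"
  shows "a \<le> b \<and> b \<le> c \<and> c \<le> d \<and> d \<le> a+b+c \<and> d > 0 \<and> 0 \<le> b"
  using assms unfolding root_nonneg_def by auto

lemma nonneg_case:
  fixes a b c d k :: int
  assumes "0 \<le> a" "a \<le> b" "b \<le> c" "c \<le> d" "d \<le> a+b+c" "QD (a,b,c,d) = k"
  shows "k \<le> 0 \<and> a^2 \<le> -k \<and> 3*b^2 \<le> -k + a^2 \<and> 4*(c*(a+b)) \<le> -k + (a+b)^2"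
proof -
  define e where "e = a+b+c-d"
  have e0: "0 \<le> e" "e \<le> a+b" using assms unfolding e_def by auto
  have ee: "e^2 \<le> (a+b)^2" using e0 by (simp add: power_mono)
  have kk: "-k = 4*(a*b+b*c+c*a) - e^2" using assms(6) QD_id e_def by simp
  have cb: "c*(a+b) \<ge> b*(a+b)" using assms by (simp add: mult_right_mono)
  have ab: "a*b \<ge> a*a" using assms by (simp add: mult_left_mono)
  have ab0: "a*b \<ge> 0" using assms by simp
  have sq: "(a+b)^2 = a*a + 2*(a*b) + b*b" by (simp add: power2_eq_square algebra_simps)
  have cab: "c*(a+b) = c*a + b*c" "b*(a+b) = a*b+b*b" by (simp_all add: algebra_simps)
  have h4: "4*(c*(a+b)) \<le> -k + (a+b)^2"
    using kk ee ab0 sq cab by (smt (verit))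
  have h3: "3*b^2 \<le> -k + a^2"
    using kk ee cb ab0 sq cab unfolding power2_eq_square by (smt (verit))
  have "a^2 \<le> -k"
    using kk ee cb ab0 ab sq cab zero_le_square[of a] zero_le_square[of b] unfolding power2_eq_square by (smt (verit))
  then show ?thesis using h3 h4 by (smt (verit) zero_le_power2)
qed

lemma neg_case:
  fixes a b c d k n :: int
  assumes "a = -n" "0 < n" "0 \<le> b" "b \<le> c" "c \<le> d" "d \<le> a+b+c" "QD (a,b,c,d) = k"
  shows "n \<le> b \<and> (b = n \<longrightarrow> d = c \<and> k = 4*n^2)
         \<and> (n < b \<longrightarrow> 3*((b-n)*(c-n)) \<le> 4*n^2 - k)"
proof -
  define e where "e = a+b+c-d"
  have e0: "0 \<le> e" "e \<le> b-n" using assms unfolding e_def by auto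
  have kk: "k = e^2 + 4*n^2 - 4*((b-n)*(c-n))"
    using assms(7) unfolding QD_id e_def assms(1) by (simp add: algebra_simps power2_eq_square)
  have 1: "n \<le> b" using e0 by simp
  have 2: "b = n \<longrightarrow> d = c \<and> k = 4*n^2"
  proof
    assume "b = n"
    then have "e = 0" using e0 by simp
    then show "d = c \<and> k = 4*n^2" using kk \<open>b = n\<close> assms unfolding e_def by simp
  qed
  have 3: "n < b \<longrightarrow> 3*((b-n)*(c-n)) \<le> 4*n^2 - k"
  proof
    assume "n < b"
    have "e^2 \<le> (b-n)^2" using e0 by (simp add: power_mono)
    also have "\<dots> = (b-n)*(b-n)" by (simp add: power2_eq_square)
    also have "\<dots> \<le> (b-n)*(c-n)" using \<open>n < b\<close> assms by (simp add: mult_left_mono)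
    finally show "3*((b-n)*(c-n)) \<le> 4*n^2 - k" using kk by linarith
  qed
  show ?thesis using 1 2 3 by blast
qed

lemma part1:
  assumes "root_quad a b c d" "QD (a,b,c,d) = k" "Lsum (a,b,c,d) > 0"
  shows "0 \<le> b \<and> b \<le> c \<and> c \<le> d
            \<and> (k > 0 \<longrightarrow> a < 0)
            \<and> (k \<le> 0 \<longrightarrow> real_of_int a \<le> sqrt (real_of_int \<bar>k\<bar>))"
proof -
  have r: "root_nonneg a b c d" using assms unfolding root_quad_def Lsum_def by auto
  note rb = root_basic[OF r]
  show ?thesis
  proof (cases "a < 0")
    case True
    then show ?thesis using rb by (smt (verit) of_int_less_0_iff real_sqrt_ge_zero)
  next
    case False
    then have nc: "k \<le> 0 \<and> a^2 \<le> -k" using nonneg_case[of a b c d k] rb assms by auto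
    then have "real_of_int a ^2 \<le> real_of_int \<bar>k\<bar>"
      by (metis abs_of_nonpos of_int_le_iff of_int_power)
    then have "real_of_int a \<le> sqrt (real_of_int \<bar>k\<bar>)" by (rule real_le_rsqrt)
    then show ?thesis using rb nc by auto
  qed
qed

lemma bound:
  fixes a b c d k n :: int
  assumes rq: "root_quad a b c d" and q: "QD (a,b,c,d) = k" and an: "a = -n"
    and ne: "\<not> (\<exists>l::int. l \<ge> 0 \<and> k = 4 * l^2 \<and> n = l)"
  defines "A \<equiv> \<bar>n\<bar> + \<bar>k\<bar> + 1"
  shows "\<bar>a\<bar> \<le> 12*(A*A) \<and> \<bar>b\<bar> \<le> 12*(A*A) \<and> \<bar>c\<bar> \<le> 12*(A*A) \<and> \<bar>d\<bar> \<le> 12*(A*A)"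
proof -
  have A1: "1 \<le> A" unfolding A_def by simp
  have AA: "A \<le> A*A" using A1 by simp
  have nA: "\<bar>n\<bar> \<le> A" "\<bar>k\<bar> \<le> A" unfolding A_def by auto
  consider (p) "root_nonneg a b c d" | (m) "root_nonneg (-d) (-c) (-b) (-a)"
    using rq unfolding root_quad_def by blast
  then show ?thesis
  proof cases
    case m
    note rb = root_basic[OF m]
    have "0 \<le> -c" "-a \<le> -d-c-b" "-c \<le> -b" "-d \<le> -c" "-b \<le> -a" using rb by auto
    then show ?thesis using an nA AA unfolding abs_le_iff by linarith
  next
    case p
    note rb = root_basic[OF p]
    show ?thesis
    proof (cases "n \<le> 0")
      case True
      then have a0: "0 \<le> a" using an by simp
      note nc = nonneg_case[OF a0 _ _ _ _ q] rb
      have ab1: "1 \<le> a+b"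
      proof (rule ccontr)
        assume "\<not> 1 \<le> a+b"
        then have "a = 0" "b = 0" using a0 rb by auto
        then have "d = c" using rb by auto
        then have "k = 0" using q \<open>a = 0\<close> \<open>b = 0\<close> unfolding QD_def by simp
        then show False using ne an \<open>a = 0\<close> by auto
      qed
      have "3*b^2 \<le> -k + a^2" using nc by auto
      moreover have "A*A = \<bar>n\<bar>*\<bar>n\<bar> + 2*(\<bar>n\<bar>*(\<bar>k\<bar>+1)) + (\<bar>k\<bar>+1)*(\<bar>k\<bar>+1)"
        unfolding A_def by (simp add: algebra_simps)
      moreover have "\<bar>k\<bar> + 1 \<le> (\<bar>k\<bar>+1)*(\<bar>k\<bar>+1)" by simp
      moreover have "0 \<le> \<bar>n\<bar>*(\<bar>k\<bar>+1)" by simp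
      moreover have "a^2 = \<bar>n\<bar>*\<bar>n\<bar>" using an by (simp add: power2_eq_square)
      moreover have "0 \<le> b^2" by simp
      ultimately have "b^2 \<le> A^2" unfolding power2_eq_square[of A] by linarith
      then have bA: "b \<le> A" using A1 power2_le_imp_le[of b A] by linarith
      have "4*(c*(a+b)) \<le> -k + (a+b)^2" using nc by auto
      also have "\<dots> \<le> A + (2*A)^2"
      proof -
        have "(a+b)^2 \<le> (2*A)^2" by (rule power_mono) (use nA an bA a0 rb in auto)
        then show ?thesis using nA by linarith
      qed
      finally have "4*(c*(a+b)) \<le> A + 4*(A*A)" by (simp add: power2_eq_square)
      moreover have "c \<le> c*(a+b)" using ab1 rb by (simp add: mult_le_cancel_left1)
      ultimately have "c \<le> 5*(A*A)" using AA A1 by linarith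
      then show ?thesis using rb a0 an nA AA bA unfolding abs_le_iff by (intro conjI; linarith)
    next
      case False
      then have n0: "0 < n" by simp
      note nc = neg_case[OF an n0 _ _ _ _ q] rb
      have "b \<noteq> n" using nc ne n0 by auto
      then have bn: "n < b" using nc by auto
      then have "3*((b-n)*(c-n)) \<le> 4*n^2 - k" using nc by auto
      also have "\<dots> \<le> 4*(A*A) + A"
      proof -
        have "\<bar>n\<bar>^2 \<le> A^2" by (rule power_mono) (use nA in auto)
        then show ?thesis using nA unfolding power2_eq_square by simp
      qed
      finally have h: "3*((b-n)*(c-n)) \<le> 4*(A*A) + A" .
      have "c - n \<le> (b-n)*(c-n)" using bn rb by (simp add: mult_le_cancel_right1)
      then have "c \<le> 6*(A*A)" using h nA AA by linarith
      then show ?thesis using rb an nA AA n0 unfolding abs_le_iff by (intro conjI; linarith)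
    qed
  qed
qed

lemma part3:
  assumes "l \<ge> 0" "k = 4 * l^2" "c \<ge> max l 1"
  shows "root_quad (-l) l c c \<and> QD (-l,l,c,c) = k"
proof -
  have "QD (-l,l,c,c) = k" using assms unfolding QD_def by (simp add: power2_eq_square algebra_simps)
  moreover have "reduced (-l,l,c,c)"
    unfolding reduced_def
  proof
    fix i :: nat assume "i \<in> {1..4}"
    then have "i = 1 \<or> i = 2 \<or> i = 3 \<or> i = 4" by auto
    then show "\<not> norm1 (S i (-l,l,c,c)) < norm1 (-l,l,c,c)"
      using assms unfolding S_def norm1_def by auto
  qed
  ultimately show ?thesis using assms unfolding root_quad_def root_nonneg_def Lsum_def by auto
qed

theorem theorem3p3:
  fixes k :: int
  shows "(\<forall>a b c d. root_quad a b c d \<and> QD (a,b,c,d) = k \<and> a \<le> b \<and> b \<le> c \<and> c \<le> d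
            \<and> Lsum (a,b,c,d) > 0 \<longrightarrow>
            0 \<le> b \<and> b \<le> c \<and> c \<le> d
            \<and> (k > 0 \<longrightarrow> a < 0)
            \<and> (k \<le> 0 \<longrightarrow> real_of_int a \<le> sqrt (real_of_int \<bar>k\<bar>)))
       \<and> (\<forall>n::int. \<not> (\<exists>l::int. l \<ge> 0 \<and> k = 4 * l^2 \<and> n = l) \<longrightarrow>
            finite {(a,b,c,d). root_quad a b c d \<and> QD (a,b,c,d) = k \<and> a = -n})
       \<and> (\<forall>l::int. l \<ge> 0 \<and> k = 4 * l^2 \<longrightarrow>
            (\<forall>c::int. c \<ge> max l 1 \<longrightarrow> root_quad (-l) l c c \<and> QD (-l,l,c,c) = k))"
proof -
  have P1: "\<forall>a b c d. root_quad a b c d \<and> QD (a,b,c,d) = k \<and> a \<le> b \<and> b \<le> c \<and> c \<le> d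
            \<and> Lsum (a,b,c,d) > 0 \<longrightarrow>
            0 \<le> b \<and> b \<le> c \<and> c \<le> d
            \<and> (k > 0 \<longrightarrow> a < 0)
            \<and> (k \<le> 0 \<longrightarrow> real_of_int a \<le> sqrt (real_of_int \<bar>k\<bar>))"
    using part1 by blast
  have P2: "finite {(a,b,c,d). root_quad a b c d \<and> QD (a,b,c,d) = k \<and> a = -n}"
    if ne: "\<not> (\<exists>l::int. l \<ge> 0 \<and> k = 4 * l^2 \<and> n = l)" for n :: int
  proof -
    define M where "M = 12*((\<bar>n\<bar> + \<bar>k\<bar> + 1)*(\<bar>n\<bar> + \<bar>k\<bar> + 1))"
    have "{(a,b,c,d). root_quad a b c d \<and> QD (a,b,c,d) = k \<and> a = -n}
          \<subseteq> {-M..M} \<times> {-M..M} \<times> {-M..M} \<times> {-M..M}"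
    proof
      fix x assume "x \<in> {(a,b,c,d). root_quad a b c d \<and> QD (a,b,c,d) = k \<and> a = -n}"
      then obtain a b c d where x: "x = (a,b,c,d)"
        and h: "root_quad a b c d" "QD (a,b,c,d) = k" "a = -n" by auto
      from bound[OF h ne] show "x \<in> {-M..M} \<times> {-M..M} \<times> {-M..M} \<times> {-M..M}"
        unfolding x M_def by (simp add: abs_le_iff)
    qed
    then show ?thesis by (rule finite_subset) auto
  qed
  have P3: "\<forall>l::int. l \<ge> 0 \<and> k = 4 * l^2 \<longrightarrow>
            (\<forall>c::int. c \<ge> max l 1 \<longrightarrow> root_quad (-l) l c c \<and> QD (-l,l,c,c) = k)"
    using part3 by blast
  show ?thesis using P1 P2 P3 by blast
qed

end
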